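(* Let $k$ be a field of characteristic zero and $T$ transcendental over $k$. Let $\mathcal{E}_0$ be the elliptic curve over $k(T)$ given by $(T^3+T+1)Y^2=X^3+X+1$, let $P=(T,1)\in\mathcal{E}_0(k(T))$, write $P_m=mP=(X_m,Y_m)$, and for $m\in\mathbb{Z}\setminus\{0\}$ put $\psi_m=X_m/(TY_m)\in k(T)$. For $m,n,r\in\mathbb{Z}\setminus\{0,1,-1\}$ let $$u=\psi_m\psi_n-\psi_r+\tfrac12 T^{-1},\qquad v=\psi_m\psi_n-\psi_r+\tfrac13 T^{-1}.$$ Let $\operatorname{ord}_T$ and $\operatorname{ord}_{T^{-1}}$ be the discrete valuations of $k(T)$ at $T$ and at $T^{-1}$, normalized with value group $\mathbb{Z}$. Then: (1) $\operatorname{ord}_T(u)=-2$ and $\operatorname{ord}_T(v)=-2$; (2) $nm=r$ if and only if ($\operatorname{ord}_{T^{-1}}(u)=1$ or $\operatorname{ord}_{T^{-1}}(v)=1$), and $nm\neq r$ if and only if ($\operatorname{ord}_{T^{-1}}(u)=0$ and $\operatorname{ord}_{T^{-1}}(v)=0$). *)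

theory Defs
  imports "HOL-Computational_Algebra.Polynomial" "HOL-Computational_Algebra.Fraction_Field"
begin

definition varT :: "'k::field poly fract" where
  "varT = Fract [:0, 1:] 1"

definition ord_T :: "'k::field poly fract \<Rightarrow> int" where
  "ord_T f = (THE n. \<exists>p q. p \<noteq> 0 \<and> q \<noteq> 0 \<and> f = Fract p q \<and>
                          n = int (order 0 p) - int (order 0 q))"

definition ord_Tinv :: "'k::field poly fract \<Rightarrow> int" where
  "ord_Tinv f = (THE n. \<exists>p q. p \<noteq> 0 \<and> q \<noteq> 0 \<and> f = Fract p q \<and>
                          n = int (degree q) - int (degree p))"

text \<open>Points on the curve  c*Y^2 = X^3 + a*X + b  (projective: Inf is the
  point at infinity, the neutral element).\<close>
datatype 'f ecpt = Inf | Aff 'f 'f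

fun ec_add :: "'f::field \<Rightarrow> 'f \<Rightarrow> 'f ecpt \<Rightarrow> 'f ecpt \<Rightarrow> 'f ecpt" where
  "ec_add c a Inf Q = Q"
| "ec_add c a (Aff x1 y1) Inf = Aff x1 y1"
| "ec_add c a (Aff x1 y1) (Aff x2 y2) =
     (if x1 = x2 \<and> y1 = - y2 then Inf
      else (let l = (if x1 = x2 then (3 * x1^2 + a) / (2 * c * y1)
                     else (y2 - y1) / (x2 - x1));
                x3 = c * l^2 - x1 - x2
            in Aff x3 (l * (x1 - x3) - y1)))"

fun ec_neg :: "'f::field ecpt \<Rightarrow> 'f ecpt" where
  "ec_neg Inf = Inf"
| "ec_neg (Aff x y) = Aff x (- y)"

fun ec_nmul :: "'f::field \<Rightarrow> 'f \<Rightarrow> nat \<Rightarrow> 'f ecpt \<Rightarrow> 'f ecpt" where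
  "ec_nmul c a 0 P = Inf"
| "ec_nmul c a (Suc n) P = ec_add c a P (ec_nmul c a n P)"

definition ec_mul :: "'f::field \<Rightarrow> 'f \<Rightarrow> int \<Rightarrow> 'f ecpt \<Rightarrow> 'f ecpt" where
  "ec_mul c a m P = (if 0 \<le> m then ec_nmul c a (nat m) P
                     else ec_neg (ec_nmul c a (nat (- m)) P))"

definition E0_c :: "'k::field poly fract" where
  "E0_c = varT ^ 3 + varT + 1"

definition Pm :: "int \<Rightarrow> 'k::field poly fract ecpt" where
  "Pm m = ec_mul E0_c 1 m (Aff varT 1)"

text \<open>psi_m = X_m / (T Y_m)  (P_m is affine for m \<noteq> 0 since P has infinite order;
  the value at Inf is an irrelevant default).\<close>
definition psi :: "int \<Rightarrow> 'k::field poly fract" where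
  "psi m = (case Pm m of Aff x y \<Rightarrow> x / (varT * y) | Inf \<Rightarrow> 0)"

end

theory Submission
  imports Defs
begin


lemma rat_int_repr:
  fixes x :: rat
  obtains a b :: int where "x = of_int a / of_int b" "b > 0" "coprime a b"
proof -
  obtain a b where "x = Rat.Fract a b" "b > 0" "coprime a b" by (cases x) auto
  then show ?thesis using that by (simp add: Fract_of_int_quotient)
qed

lemma coprime_dvd_pow_unit: "coprime (a::int) b \<Longrightarrow> b dvd a^k \<Longrightarrow> b dvd 1"
  by (metis coprime_commute coprime_power_right_iff coprime_dvd_mult_right_iff dvd_refl mult.right_neutral coprime_absorb_left)

lemma no_root3: "(x::rat)^3 + x + 1 \<noteq> 0"
proof
  assume h: "x^3 + x + 1 = 0"
  obtain a b :: int where x: "x = of_int a / of_int b" "b > 0" "coprime a b"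
    by (rule rat_int_repr)
  have "of_int (a^3 + a*b^2 + b^3) = (of_int b)^3 * (x^3 + x + 1)"
    unfolding x(1) using x(2) by (simp add: field_simps power3_eq_cube power2_eq_square)
  with h have "(of_int (a^3 + a*b^2 + b^3) :: rat) = 0" by simp
  hence e: "a^3 + a*b^2 + b^3 = 0" by (simp only: of_int_eq_0_iff)
  have "a^3 = b * (- a*b - b^2)" using e by (simp add: algebra_simps power2_eq_square power3_eq_cube)
  hence "b dvd a^3" by simp
  hence "b dvd 1" using x(3) coprime_dvd_pow_unit by blast
  hence b1: "b = 1" using x(2) by simp
  with e have e2: "a^3 + a + 1 = 0" by simp
  have "1 = a * (0 - a^2 - 1)" using e2 by (simp add: algebra_simps power2_eq_square power3_eq_cube)
  hence "a dvd 1" by (metis dvd_triv_left)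
  hence "a = 1 \<or> a = -1" by auto
  with e2 show False by auto
qed

lemma no_root4: "(x::rat)^4 - 2*x^2 - 8*x + 1 \<noteq> 0"
proof
  assume h: "x^4 - 2*x^2 - 8*x + 1 = 0"
  obtain a b :: int where x: "x = of_int a / of_int b" "b > 0" "coprime a b"
    by (rule rat_int_repr)
  have "of_int (a^4 - 2*a^2*b^2 - 8*a*b^3 + b^4) = (of_int b)^4 * (x^4 - 2*x^2 - 8*x + 1)"
    unfolding x(1) using x(2) by (simp add: field_simps power2_eq_square power3_eq_cube power4_eq_xxxx)
  with h have "(of_int (a^4 - 2*a^2*b^2 - 8*a*b^3 + b^4) :: rat) = 0" by simp
  hence e: "a^4 - 2*a^2*b^2 - 8*a*b^3 + b^4 = 0" by (simp only: of_int_eq_0_iff)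
  have "a^4 = b * (2*a^2*b + 8*a*b^2 - b^3)" using e by (simp add: algebra_simps power2_eq_square power3_eq_cube power4_eq_xxxx)
  hence "b dvd a^4" by simp
  hence "b dvd 1" using x(3) coprime_dvd_pow_unit by blast
  hence b1: "b = 1" using x(2) by simp
  with e have e2: "a^4 - 2*a^2 - 8*a + 1 = 0" by simp
  have "1 = a * (0 - a^3 + 2*a + 8)" using e2 by (simp add: algebra_simps power2_eq_square power3_eq_cube power4_eq_xxxx)
  hence "a dvd 1" by (metis dvd_triv_left)
  hence "a = 1 \<or> a = -1" by auto
  with e2 show False by auto
qed

abbreviation QQ :: "rat ecpt" where "QQ \<equiv> Aff 0 1"

definition Sq :: "nat \<Rightarrow> rat ecpt" where "Sq n = ec_nmul 1 1 n QQ"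

lemma Sq_Suc: "Sq (Suc n) = ec_add 1 1 QQ (Sq n)"
  by (simp add: Sq_def)

lemma Sq_0: "Sq 0 = Inf" by (simp add: Sq_def)
lemma Sq_1: "Sq 1 = QQ" by (simp add: Sq_def)
lemma Sq_2: "Sq 2 = Aff (1/4) (-9/8)"
  by (simp add: Sq_def numeral_2_eq_2 Let_def power2_eq_square)

definition onc :: "rat ecpt \<Rightarrow> bool" where
  "onc P = (case P of Inf \<Rightarrow> True | Aff x y \<Rightarrow> y^2 = x^3 + x + 1)"

lemma chord_Q: "x \<noteq> 0 \<Longrightarrow> ec_add 1 1 QQ (Aff x y) =
   Aff (((y-1)/x)^2 - x) (- ((y-1)/x) * (((y-1)/x)^2 - x) - 1)"
  by (simp add: Let_def)

lemma chord_onc: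
  fixes x y :: rat
  assumes x: "x \<noteq> 0" and c: "y^2 = x^3 + x + 1"
  defines "l \<equiv> (y-1)/x"
  shows "(- l * (l^2 - x) - 1)^2 = (l^2 - x)^3 + (l^2 - x) + 1"
proof -
  have lx: "y = l*x + 1" using x by (simp add: l_def field_simps)
  have "x * (x^2 - l^2*x + 1 - 2*l) = 0"
    using c unfolding lx by (simp add: algebra_simps power2_eq_square power3_eq_cube)
  hence q: "x^2 - l^2*x + 1 - 2*l = 0" using x by simp
  define z where "z = l^2 - x"
  have qz: "z^2 - l^2*z + 1 - 2*l = 0"
    using q unfolding z_def by (simp add: algebra_simps power2_eq_square)
  have "(- l * z - 1)^2 - (z^3 + z + 1) = - z * (z^2 - l^2*z + 1 - 2*l)"
    by (simp add: algebra_simps power2_eq_square power3_eq_cube)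
  also have "\<dots> = 0" using qz by simp
  finally show ?thesis unfolding z_def by simp
qed

lemma onc_Sq: "onc (Sq n)"
proof (induction n)
  case 0 then show ?case by (simp add: Sq_0 onc_def)
next
  case (Suc n)
  show ?case
  proof (cases "Sq n")
    case Inf then show ?thesis by (simp add: Sq_Suc onc_def)
  next
    case (Aff x y)
    with Suc have c: "y^2 = x^3 + x + 1" by (simp add: onc_def)
    show ?thesis
    proof (cases "x = 0")
      case True
      with c have "y^2 = 1" by simp
      hence "y = 1 \<or> y = -1" by (metis power2_eq_1_iff)
      then show ?thesis using True Aff
        by (auto simp add: Sq_Suc onc_def Let_def power2_eq_square power3_eq_cube)
    next
      case False
      show ?thesis using chord_onc[OF False c] False Aff
        by (simp add: Sq_Suc onc_def chord_Q del: ec_add.simps)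
    qed
  qed
qed

lemma add_Q_Inf: "ec_add 1 1 QQ R = Inf \<Longrightarrow> R = Aff 0 (-1)"
  by (cases R) (auto simp: Let_def split: if_splits)

lemma add_Q_Q: "onc R \<Longrightarrow> ec_add 1 1 QQ R = QQ \<Longrightarrow> R = Inf"
proof (cases R)
  case (Aff x y)
  assume o: "onc R" and e: "ec_add 1 1 QQ R = QQ"
  show ?thesis
  proof (cases "x = 0")
    case True
    with o Aff have "y^2 = 1" by (simp add: onc_def)
    hence "y = 1 \<or> y = -1" by (metis power2_eq_1_iff)
    then show ?thesis using e Aff True by (auto simp: Let_def power2_eq_square)
  next
    case False
    define l where "l = (y-1)/x"
    have "ec_add 1 1 QQ (Aff x y) = Aff (l^2 - x) (- l * (l^2 - x) - 1)"
      unfolding l_def by (rule chord_Q[OF False])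
    hence "Aff (l^2 - x) (- l * (l^2 - x) - 1) = QQ"
      using e Aff by metis
    hence h1: "l^2 - x = 0" and h2: "- l * (l^2 - x) - 1 = 1" by (metis ecpt.inject)+
    have False using h2 unfolding h1 by simp
    then show ?thesis ..
  qed
qed simp

lemma line_sym:
  fixes x y a b :: rat
  assumes x: "x \<noteq> 0" and a: "a \<noteq> 0" and e: "ec_add 1 1 QQ (Aff x y) = Aff a b"
  shows "ec_add 1 1 QQ (Aff a (-b)) = Aff x (-y)"
proof -
  define l where "l = (y-1)/x"
  have "ec_add 1 1 QQ (Aff x y) = Aff (l^2 - x) (- l * (l^2 - x) - 1)"
    unfolding l_def by (rule chord_Q[OF x])
  hence "Aff (l^2 - x) (- l * (l^2 - x) - 1) = Aff a b"
    using e by metis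
  hence "l^2 - x = a \<and> - l * (l^2 - x) - 1 = b" by (metis ecpt.inject)
  hence ea: "a = l^2 - x" and eb: "b = - l * (l^2 - x) - 1" by auto
  have lx: "y = l*x + 1" using x by (simp add: l_def field_simps)
  have lb: "-b - 1 = l * a" unfolding eb ea by simp
  have l2: "(-b - 1)/a = l" using a lb by simp
  have "ec_add 1 1 QQ (Aff a (-b)) = Aff (((-b-1)/a)^2 - a) (- ((-b-1)/a) * (((-b-1)/a)^2 - a) - 1)"
    by (rule chord_Q[OF a])
  also have "\<dots> = Aff (l^2 - a) (- l * (l^2 - a) - 1)" unfolding l2 ..
  also have "l^2 - a = x" using ea by simp
  also have "- l * x - 1 = -y" using lx by simp
  finally show ?thesis .
qed

lemma back_Q:
  fixes x y :: rat
  assumes x: "x \<noteq> 0" and c: "y^2 = x^3 + x + 1" and e: "ec_add 1 1 QQ (Aff x y) = Aff 0 (-1)"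
  shows "x = 1/4 \<and> y = 9/8"
proof -
  define l where "l = (y-1)/x"
  have ea: "l^2 = x" using e x by (simp add: chord_Q l_def del: ec_add.simps)
  have lx: "y = l*x + 1" using x by (simp add: l_def field_simps)
  have "(y-1)^2 = x^3" using ea lx by (simp add: power2_eq_square power3_eq_cube algebra_simps)
  with c have xy: "x = 2*y - 2" by (simp add: power2_eq_square algebra_simps)
  with x have y1: "y - 1 \<noteq> 0" by simp
  have "(y-1)^2 * (1 - 8*(y-1)) = 0"
    using \<open>(y-1)^2 = x^3\<close> unfolding xy by (simp add: algebra_simps power2_eq_square power3_eq_cube)
  with y1 have "y = 9/8" by simp
  with xy show ?thesis by simp
qed

lemma no_half:
  fixes x y :: rat
  assumes x: "x \<noteq> 0" and c: "y^2 = x^3 + x + 1" and e: "ec_add 1 1 QQ (Aff x y) = Aff x (-y)"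
  shows False
proof -
  define l where "l = (y-1)/x"
  have ea: "l^2 = 2*x" using e x by (simp add: chord_Q l_def del: ec_add.simps)
  have lx: "y = l*x + 1" using x by (simp add: l_def field_simps)
  have "(y-1)^2 = 2*x^3" using ea lx by (simp add: power2_eq_square power3_eq_cube algebra_simps)
  with c have y2: "2*y = x + 2 - x^3" by (simp add: power2_eq_square power3_eq_cube algebra_simps)
  have "(2*y)^2 = 4*(x^3+x+1)" using c by simp
  hence "(x + 2 - x^3)^2 = 4*(x^3+x+1)" using y2 by simp
  hence "x^2 * (x^4 - 2*x^2 - 8*x + 1) = 0"
    by (simp add: algebra_simps power2_eq_square power3_eq_cube power4_eq_xxxx)
  with x no_root4 show False by simp
qed

lemma onc_Aff: "Sq n = Aff x y \<Longrightarrow> y^2 = x^3 + x + 1"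
  using onc_Sq[of n] by (simp add: onc_def)

lemma Sq_nonInf: "n \<ge> 1 \<Longrightarrow> Sq n \<noteq> Inf"
proof (rule ccontr)
  assume "n \<ge> 1" "\<not> Sq n \<noteq> Inf"
  hence ex: "\<exists>n. 1 \<le> n \<and> Sq n = Inf" by auto
  define N where "N = (LEAST n. 1 \<le> n \<and> Sq n = Inf)"
  have N1: "1 \<le> N" and SN: "Sq N = Inf" using LeastI_ex[OF ex] unfolding N_def by auto
  have minN: "Sq k \<noteq> Inf" if "1 \<le> k" "k < N" for k
    using not_less_Least[of k "\<lambda>n. 1 \<le> n \<and> Sq n = Inf"] that unfolding N_def by auto
  have "N \<noteq> 1" using SN Sq_1 by auto
  moreover have "N \<noteq> 2" using SN Sq_2 by auto
  ultimately have N3: "N \<ge> 3" using N1 by linarith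
  have A: "\<exists>x y. Sq k = Aff x y \<and> x \<noteq> 0" if k: "2 \<le> k" "k \<le> N - 2" for k
  proof -
    have "k < N" "1 \<le> k" using k N3 by auto
    then obtain x y where xy: "Sq k = Aff x y" using minN[of k] by (cases "Sq k") auto
    have "x \<noteq> 0"
    proof
      assume x0: "x = 0"
      with onc_Aff[OF xy] have "y^2 = 1" by simp
      hence "y = 1 \<or> y = -1" by (metis power2_eq_1_iff)
      then show False
      proof
        assume "y = -1"
        hence "Sq (Suc k) = Inf" using xy x0 by (simp add: Sq_Suc)
        moreover have "Suc k < N" using k N3 by arith
        ultimately show False using minN[of "Suc k"] by auto
      next
        assume "y = 1"
        hence "ec_add 1 1 QQ (Sq (k - 1)) = QQ" using xy x0 Sq_Suc[of "k-1"] k by simp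
        hence "Sq (k-1) = Inf" using add_Q_Q onc_Sq by blast
        with minN[of "k-1"] k N3 show False by auto
      qed
    qed
    with xy show ?thesis by blast
  qed
  have B: "Sq (N - 1) = Aff 0 (-1)"
    using SN Sq_Suc[of "N-1"] N1 add_Q_Inf by simp
  have C: "Sq (N - k) = ec_neg (Sq k)" if "1 \<le> k" "k \<le> N - 1" for k
    using that
  proof (induction k rule: dec_induct)
    case base then show ?case using B Sq_1 by simp
  next
    case (step k)
    have IH: "Sq (N - k) = ec_neg (Sq k)" using step by simp
    have eqs: "Sq (N - k) = ec_add 1 1 QQ (Sq (N - Suc k))"
      using Sq_Suc[of "N - Suc k"] step.prems by (simp add: Suc_diff_Suc)
    show ?case
    proof (cases "N - Suc k = 1")
      case True
      hence "Suc k = N - 1" using N3 by linarith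
      then show ?thesis using True B Sq_1 by simp
    next
      case False
      hence r2: "2 \<le> N - Suc k" using step.prems by linarith
      obtain x y where xy: "Sq (N - Suc k) = Aff x y" and x0: "x \<noteq> 0"
        using A[OF r2] step.prems step.hyps by (metis diff_le_mono2 Suc_1 Suc_le_mono)
      show ?thesis
      proof (cases "k = 1")
        case True
        hence "ec_add 1 1 QQ (Aff x y) = Aff 0 (-1)" using IH eqs xy Sq_1 by simp
        hence "x = 1/4 \<and> y = 9/8" using back_Q[OF x0 onc_Aff[OF xy]] by simp
        then show ?thesis using xy True Sq_2 by (simp add: numeral_2_eq_2)
      next
        case False
        hence k2: "2 \<le> k" using step.hyps by linarith
        obtain a b where ab: "Sq k = Aff a b" and a0: "a \<noteq> 0"
        proof -
          have "k \<le> N - 2" using step.prems by arith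
          then show ?thesis using A[OF k2] that by auto
        qed
        have "ec_add 1 1 QQ (Aff x y) = Aff a (-b)" using IH eqs xy ab by simp
        from line_sym[OF x0 a0 this] have "Sq (Suc k) = Aff x (-y)"
          using Sq_Suc[of k] ab by simp
        then show ?thesis using xy by simp
      qed
    qed
  qed
  show False
  proof (cases "even N")
    case True
    then obtain M where M: "N = 2*M" by auto
    hence M2: "2 \<le> M" "M \<le> N - 1" using N3 by auto
    have "Sq M = ec_neg (Sq M)" using C[OF _ M2(2)] M2 M by (simp add: mult_2)
    moreover obtain x y where xy: "Sq M = Aff x y" using minN[of M] M2 M by (cases "Sq M") auto
    ultimately have "y = 0" by simp
    with onc_Aff[OF xy] no_root3[of x] show False by simp
  next
    case False
    then obtain M where M: "N = 2*M + 1" by (metis oddE)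
    hence M1: "1 \<le> M" using N3 by auto
    have e: "Sq (Suc M) = ec_neg (Sq M)" using C[of M] M1 M by simp
    show False
    proof (cases "M = 1")
      case True
      with e Sq_1 Sq_2 show False by (simp add: numeral_2_eq_2)
    next
      case False
      hence "2 \<le> M" "M \<le> N - 2" using M1 M by auto
      from A[OF this] obtain x y where xy: "Sq M = Aff x y" and x0: "x \<noteq> 0" by auto
      have "ec_add 1 1 QQ (Aff x y) = Aff x (-y)" using e xy Sq_Suc[of M] by simp
      from no_half[OF x0 onc_Aff[OF xy] this] show False .
    qed
  qed
qed

lemma Sq_good: "n \<ge> 2 \<Longrightarrow> \<exists>x y. Sq n = Aff x y \<and> x \<noteq> 0 \<and> y \<noteq> 0"
proof -
  assume n: "n \<ge> 2"
  obtain x y where xy: "Sq n = Aff x y" using Sq_nonInf[of n] n by (cases "Sq n") auto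
  have y0: "y \<noteq> 0" using onc_Aff[OF xy] no_root3[of x] by auto
  have "x \<noteq> 0"
  proof
    assume x0: "x = 0"
    with onc_Aff[OF xy] have "y^2 = 1" by simp
    hence "y = 1 \<or> y = -1" by (metis power2_eq_1_iff)
    then show False
    proof
      assume "y = -1"
      hence "Sq (Suc n) = Inf" using xy x0 by (simp add: Sq_Suc)
      with Sq_nonInf[of "Suc n"] show False by auto
    next
      assume "y = 1"
      hence "ec_add 1 1 QQ (Sq (n - 1)) = QQ" using xy x0 Sq_Suc[of "n-1"] n by simp
      hence "Sq (n-1) = Inf" using add_Q_Q onc_Sq by blast
      with Sq_nonInf[of "n-1"] n show False by auto
    qed
  qed
  with xy y0 show ?thesis by blast
qed



section \<open>Local ring at T = 0\<close>

definition has0 :: "'k::field poly fract \<Rightarrow> 'k \<Rightarrow> bool" where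
  "has0 f v \<longleftrightarrow> (\<exists>p q. poly q 0 \<noteq> 0 \<and> f = Fract p q \<and> v = poly p 0 / poly q 0)"

lemma has0_Fract: "poly q 0 \<noteq> 0 \<Longrightarrow> has0 (Fract p q) (poly p 0 / poly q 0)"
  unfolding has0_def by blast

lemma has0_add: "has0 f v \<Longrightarrow> has0 g w \<Longrightarrow> has0 (f + g) (v + w)"
proof -
  assume "has0 f v" "has0 g w"
  then obtain p q p' q' where a: "poly q 0 \<noteq> 0" "f = Fract p q" "v = poly p 0 / poly q 0"
    and b: "poly q' 0 \<noteq> 0" "g = Fract p' q'" "w = poly p' 0 / poly q' 0"
    unfolding has0_def by blast
  have "q \<noteq> 0" "q' \<noteq> 0" using a b by auto
  then have "f + g = Fract (p * q' + p' * q) (q * q')" using a b by simp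
  moreover have "poly (q * q') 0 \<noteq> 0" using a b by simp
  moreover have "v + w = poly (p * q' + p' * q) 0 / poly (q * q') 0"
    unfolding a(3) b(3) using a(1) b(1) by (simp add: field_simps)
  ultimately show ?thesis unfolding has0_def by blast
qed

lemma has0_mult: "has0 f v \<Longrightarrow> has0 g w \<Longrightarrow> has0 (f * g) (v * w)"
proof -
  assume "has0 f v" "has0 g w"
  then obtain p q p' q' where a: "poly q 0 \<noteq> 0" "f = Fract p q" "v = poly p 0 / poly q 0"
    and b: "poly q' 0 \<noteq> 0" "g = Fract p' q'" "w = poly p' 0 / poly q' 0"
    unfolding has0_def by blast
  have "f * g = Fract (p * p') (q * q')" using a b by simp
  moreover have "poly (q * q') 0 \<noteq> 0" using a b by simp
  moreover have "v * w = poly (p * p') 0 / poly (q * q') 0"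
    unfolding a(3) b(3) using a(1) b(1) by (simp add: field_simps)
  ultimately show ?thesis unfolding has0_def by blast
qed

lemma has0_uminus: "has0 f v \<Longrightarrow> has0 (- f) (- v)"
proof -
  assume "has0 f v"
  then obtain p q where a: "poly q 0 \<noteq> 0" "f = Fract p q" "v = poly p 0 / poly q 0"
    unfolding has0_def by blast
  show ?thesis unfolding has0_def
    by (rule exI[of _ "- p"], rule exI[of _ q]) (use a in simp)
qed

lemma has0_diff: "has0 f v \<Longrightarrow> has0 g w \<Longrightarrow> has0 (f - g) (v - w)"
  using has0_add[OF _ has0_uminus, of f v g w] by simp

lemma has0_inverse: "has0 f v \<Longrightarrow> v \<noteq> 0 \<Longrightarrow> has0 (inverse f) (inverse v)"
proof -
  assume "has0 f v" "v \<noteq> 0"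
  then obtain p q where a: "poly q 0 \<noteq> 0" "f = Fract p q" "v = poly p 0 / poly q 0"
    unfolding has0_def by blast
  with \<open>v \<noteq> 0\<close> have "poly p 0 \<noteq> 0" by auto
  then show ?thesis unfolding has0_def
    by (rule_tac exI[of _ q], rule_tac exI[of _ p]) (use a in simp)
qed

lemma has0_divide: "has0 f v \<Longrightarrow> has0 g w \<Longrightarrow> w \<noteq> 0 \<Longrightarrow> has0 (f / g) (v / w)"
  using has0_mult[OF _ has0_inverse, of f v g w] by (simp add: divide_inverse)

lemma has0_unique: "has0 f v \<Longrightarrow> has0 f w \<Longrightarrow> v = w"
proof -
  assume "has0 f v" "has0 f w"
  then obtain p q p' q' where a: "poly q 0 \<noteq> 0" "f = Fract p q" "v = poly p 0 / poly q 0"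
    and b: "poly q' 0 \<noteq> 0" "f = Fract p' q'" "w = poly p' 0 / poly q' 0"
    unfolding has0_def by blast
  have "q \<noteq> 0" "q' \<noteq> 0" using a b by auto
  then have "p * q' = p' * q" using a b eq_fract(1) by metis
  then have "poly p 0 * poly q' 0 = poly p' 0 * poly q 0" by (metis poly_mult)
  then show ?thesis unfolding a(3) b(3) using a(1) b(1) by (simp add: frac_eq_eq)
qed

lemma has0_const: "has0 (Fract [:c:] 1) c"
  using has0_Fract[of 1 "[:c:]"] by simp

lemma has0_one: "has0 1 1"
  using has0_Fract[of 1 1] by (simp add: fract_collapse)

lemma has0_zero: "has0 0 0"
  using has0_Fract[of 1 0] by (simp add: fract_collapse)

lemma has0_of_nat: "has0 (of_nat n) (of_nat n)"
  using has0_Fract[of 1 "of_nat n"] by (simp add: of_nat_fract)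

lemma has0_numeral: "has0 (numeral n) (numeral n)"
  using has0_of_nat[of "numeral n"] by simp

lemma has0_power: "has0 f v \<Longrightarrow> has0 (f ^ n) (v ^ n)"
  by (induction n) (simp_all add: has0_one has0_mult)

lemma has0_varT: "has0 varT 0"
  unfolding varT_def using has0_Fract[of 1 "[:0,1:]"] by simp

section \<open>Local ring at infinity\<close>

definition hasI :: "'k::field poly fract \<Rightarrow> 'k \<Rightarrow> bool" where
  "hasI f v \<longleftrightarrow> (\<exists>p q. q \<noteq> 0 \<and> degree p \<le> degree q \<and> f = Fract p q \<and>
                   v = coeff p (degree q) / lead_coeff q)"

lemma coeff_mult_le:
  fixes p q :: "'a::comm_semiring_1 poly"
  assumes "degree p \<le> m" "degree q \<le> n"
  shows "coeff (p * q) (m + n) = coeff p m * coeff q n"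
proof -
  have "coeff (p * q) (m + n) = (\<Sum>i\<le>m+n. coeff p i * coeff q (m + n - i))"
    by (rule coeff_mult)
  also have "\<dots> = coeff p m * coeff q (m + n - m) + (\<Sum>i\<in>{..m+n}-{m}. coeff p i * coeff q (m + n - i))"
    by (rule sum.remove) auto
  also have "(\<Sum>i\<in>{..m+n}-{m}. coeff p i * coeff q (m + n - i)) = 0"
  proof (rule sum.neutral, rule ballI)
    fix i assume "i \<in> {..m+n}-{m}"
    then have i: "i \<le> m + n" "i \<noteq> m" by auto
    show "coeff p i * coeff q (m + n - i) = 0"
    proof (cases "i < m")
      case True
      then have "degree q < m + n - i" using assms by arith
      then show ?thesis by (simp add: coeff_eq_0)
    next
      case False
      then have "degree p < i" using assms i by arith
      then show ?thesis by (simp add: coeff_eq_0)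
    qed
  qed
  finally show ?thesis by simp
qed

lemma hasI_Fract: "q \<noteq> 0 \<Longrightarrow> degree p \<le> degree q \<Longrightarrow> hasI (Fract p q) (coeff p (degree q) / lead_coeff q)"
  unfolding hasI_def by blast

lemma hasI_add: "hasI f v \<Longrightarrow> hasI g w \<Longrightarrow> hasI (f + g) (v + w)"
proof -
  assume "hasI f v" "hasI g w"
  then obtain p q p' q' where a: "q \<noteq> 0" "degree p \<le> degree q" "f = Fract p q" "v = coeff p (degree q) / lead_coeff q"
    and b: "q' \<noteq> 0" "degree p' \<le> degree q'" "g = Fract p' q'" "w = coeff p' (degree q') / lead_coeff q'"
    unfolding hasI_def by blast
  have fg: "f + g = Fract (p * q' + p' * q) (q * q')" using a b by simp
  have dq: "degree (q * q') = degree q + degree q'" using a b by (simp add: degree_mult_eq)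
  have "degree (p * q') \<le> degree q + degree q'"
    using degree_mult_le[of p q'] a b by linarith
  moreover have "degree (p' * q) \<le> degree q + degree q'"
    using degree_mult_le[of p' q] a b by linarith
  ultimately have dn: "degree (p * q' + p' * q) \<le> degree (q * q')"
    unfolding dq by (meson degree_add_le)
  have c1: "coeff (p * q') (degree q + degree q') = coeff p (degree q) * coeff q' (degree q')"
    by (rule coeff_mult_le) (use a in auto)
  have c2: "coeff (p' * q) (degree q + degree q') = coeff p' (degree q') * coeff q (degree q)"
    by (subst add.commute, rule coeff_mult_le) (use b in auto)
  have l: "lead_coeff q \<noteq> 0" "lead_coeff q' \<noteq> 0" using a b by auto
  have "v + w = coeff (p * q' + p' * q) (degree (q * q')) / lead_coeff (q * q')"
    unfolding dq coeff_add c1 c2 a(4) b(4) coeff_mult_degree_sum using l by (simp add: field_simps)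
  with fg dn a b show ?thesis unfolding hasI_def by (metis mult_eq_0_iff)
qed

lemma hasI_mult: "hasI f v \<Longrightarrow> hasI g w \<Longrightarrow> hasI (f * g) (v * w)"
proof -
  assume "hasI f v" "hasI g w"
  then obtain p q p' q' where a: "q \<noteq> 0" "degree p \<le> degree q" "f = Fract p q" "v = coeff p (degree q) / lead_coeff q"
    and b: "q' \<noteq> 0" "degree p' \<le> degree q'" "g = Fract p' q'" "w = coeff p' (degree q') / lead_coeff q'"
    unfolding hasI_def by blast
  have fg: "f * g = Fract (p * p') (q * q')" using a b by simp
  have dq: "degree (q * q') = degree q + degree q'" using a b by (simp add: degree_mult_eq)
  have dn: "degree (p * p') \<le> degree (q * q')"
    using degree_mult_le[of p p'] a b unfolding dq by linarith
  have c1: "coeff (p * p') (degree q + degree q') = coeff p (degree q) * coeff p' (degree q')"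
    by (rule coeff_mult_le) (use a b in auto)
  have "v * w = coeff (p * p') (degree (q * q')) / lead_coeff (q * q')"
    unfolding dq c1 a(4) b(4) coeff_mult_degree_sum by simp
  with fg dn a b show ?thesis unfolding hasI_def by (metis mult_eq_0_iff)
qed

lemma hasI_uminus: "hasI f v \<Longrightarrow> hasI (- f) (- v)"
proof -
  assume "hasI f v"
  then obtain p q where a: "q \<noteq> 0" "degree p \<le> degree q" "f = Fract p q" "v = coeff p (degree q) / lead_coeff q"
    unfolding hasI_def by blast
  show ?thesis unfolding hasI_def
    by (rule exI[of _ "- p"], rule exI[of _ q]) (use a in simp)
qed

lemma hasI_diff: "hasI f v \<Longrightarrow> hasI g w \<Longrightarrow> hasI (f - g) (v - w)"
  using hasI_add[OF _ hasI_uminus, of f v g w] by simp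

lemma hasI_inverse: "hasI f v \<Longrightarrow> v \<noteq> 0 \<Longrightarrow> hasI (inverse f) (inverse v)"
proof -
  assume "hasI f v" "v \<noteq> 0"
  then obtain p q where a: "q \<noteq> 0" "degree p \<le> degree q" "f = Fract p q" "v = coeff p (degree q) / lead_coeff q"
    unfolding hasI_def by blast
  with \<open>v \<noteq> 0\<close> have c: "coeff p (degree q) \<noteq> 0" by auto
  then have "p \<noteq> 0" by auto
  from c have "degree q \<le> degree p" using le_degree by blast
  with a have d: "degree p = degree q" by simp
  have "inverse f = Fract q p" using a by simp
  moreover have "inverse v = coeff q (degree p) / lead_coeff p" unfolding a(4) d by simp
  ultimately show ?thesis using \<open>p \<noteq> 0\<close> d unfolding hasI_def by (metis order_refl)
qed

lemma hasI_divide: "hasI f v \<Longrightarrow> hasI g w \<Longrightarrow> w \<noteq> 0 \<Longrightarrow> hasI (f / g) (v / w)"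
  using hasI_mult[OF _ hasI_inverse, of f v g w] by (simp add: divide_inverse)

lemma hasI_unique: "hasI f v \<Longrightarrow> hasI f w \<Longrightarrow> v = w"
proof -
  assume "hasI f v" "hasI f w"
  then obtain p q p' q' where a: "q \<noteq> 0" "degree p \<le> degree q" "f = Fract p q" "v = coeff p (degree q) / lead_coeff q"
    and b: "q' \<noteq> 0" "degree p' \<le> degree q'" "f = Fract p' q'" "w = coeff p' (degree q') / lead_coeff q'"
    unfolding hasI_def by blast
  then have e: "p * q' = p' * q" using eq_fract(1) by metis
  have c1: "coeff (p * q') (degree q + degree q') = coeff p (degree q) * coeff q' (degree q')"
    by (rule coeff_mult_le) (use a in auto)
  have c2: "coeff (p' * q) (degree q' + degree q) = coeff p' (degree q') * coeff q (degree q)"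
    by (rule coeff_mult_le) (use b in auto)
  have "coeff p (degree q) * lead_coeff q' = coeff p' (degree q') * lead_coeff q"
    using c1 c2 e by (simp add: add.commute)
  then show ?thesis unfolding a(4) b(4) using a(1) b(1) by (simp add: frac_eq_eq)
qed

lemma hasI_const: "hasI (Fract [:c:] 1) c"
  using hasI_Fract[of 1 "[:c:]"] by simp

lemma hasI_one: "hasI 1 1"
  using hasI_const[of 1] by (metis fract_collapse(2) one_pCons)

lemma hasI_zero: "hasI 0 0"
  using hasI_const[of 0] by (simp add: fract_collapse)

lemma hasI_of_nat: "hasI (of_nat n) (of_nat n)"
  using hasI_const[of "of_nat n"] by (simp add: of_nat_fract of_nat_poly)

lemma hasI_numeral: "hasI (numeral n) (numeral n)"
  using hasI_of_nat[of "numeral n"] by simp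

lemma hasI_power: "hasI f v \<Longrightarrow> hasI (f ^ n) (v ^ n)"
  by (induction n) (simp_all add: hasI_one hasI_mult)

lemma hasI_invT: "hasI (inverse varT) 0"
  unfolding varT_def using hasI_Fract[of "[:0,1:]" 1] by simp

lemma hasI_T0: "hasI g 0 \<Longrightarrow> \<exists>w. hasI (varT * g) w"
proof -
  assume "hasI g 0"
  then obtain p q where a: "q \<noteq> 0" "degree p \<le> degree q" "g = Fract p q" "coeff p (degree q) = 0"
    unfolding hasI_def by auto
  have "degree ([:0,1:] * p) \<le> degree q"
  proof (cases "p = 0")
    case False
    then have "degree p \<noteq> degree q" using a by (metis leading_coeff_0_iff)
    then show ?thesis using a False by (simp add: degree_mult_eq)
  qed simp
  moreover have "varT * g = Fract ([:0,1:] * p) q" using a by (simp add: varT_def)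
  ultimately show ?thesis using a unfolding hasI_def by blast
qed

section \<open>Orders\<close>

lemma ordT_m2:
  fixes g :: "'k::field poly fract"
  assumes "has0 g w" "w \<noteq> 0"
  shows "ord_T (g / varT^2) = -2"
proof -
  obtain p q where a: "poly q 0 \<noteq> 0" "g = Fract p q" "w = poly p 0 / poly q 0"
    using assms unfolding has0_def by blast
  have p0: "poly p 0 \<noteq> 0" using a assms by auto
  define q2 where "q2 = q * [:0,1:]^2"
  have qn: "q \<noteq> 0" "p \<noteq> 0" using a p0 by auto
  have q2n: "q2 \<noteq> 0" using qn by (simp add: q2_def)
  have vt: "varT^2 = Fract ([:0,1:]^2) (1::'k poly)" by (simp add: varT_def power2_eq_square)
  have fe: "g / varT^2 = Fract p q2" unfolding vt a(2) q2_def by simp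
  have op: "order 0 p = 0" using p0 by (rule order_0I)
  have oq: "order 0 q = 0" using a(1) by (rule order_0I)
  have ox: "order 0 ([:0,1:]^2 :: 'k poly) = 2" using order_power_n_n[of "0::'k" 2] by simp
  have oq2: "order 0 q2 = 2" unfolding q2_def using q2n q2_def oq ox by (simp add: order_mult)
  show ?thesis unfolding ord_T_def
  proof (rule the_equality)
    show "\<exists>p' q'. p' \<noteq> 0 \<and> q' \<noteq> 0 \<and> g / varT^2 = Fract p' q' \<and> (-2::int) = int (order 0 p') - int (order 0 q')"
      by (rule exI[of _ p], rule exI[of _ q2]) (use qn q2n fe op oq2 in simp)
  next
    fix n assume "\<exists>p' q'. p' \<noteq> 0 \<and> q' \<noteq> 0 \<and> g / varT^2 = Fract p' q' \<and> n = int (order 0 p') - int (order 0 q')"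
    then obtain p' q' where b: "p' \<noteq> 0" "q' \<noteq> 0" "Fract p q2 = Fract p' q'" "n = int (order 0 p') - int (order 0 q')"
      using fe by auto
    have e: "p * q' = p' * q2" using b q2n eq_fract(1) by metis
    have "order 0 (p * q') = order 0 (p' * q2)" using e by simp
    hence "order 0 p + order 0 q' = order 0 p' + order 0 q2"
      using qn b q2n by (simp add: order_mult)
    then show "n = -2" using b op oq2 by simp
  qed
qed

lemma ordTi_0:
  fixes g :: "'k::field poly fract"
  assumes "hasI g w" "w \<noteq> 0"
  shows "ord_Tinv g = 0"
proof -
  obtain p q where a: "q \<noteq> 0" "degree p \<le> degree q" "g = Fract p q" "w = coeff p (degree q) / lead_coeff q"
    using assms unfolding hasI_def by blast
  with assms have c: "coeff p (degree q) \<noteq> 0" by auto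
  then have pn: "p \<noteq> 0" by auto
  from c have "degree q \<le> degree p" using le_degree by blast
  with a have d: "degree p = degree q" by simp
  show ?thesis unfolding ord_Tinv_def
  proof (rule the_equality)
    show "\<exists>p' q'. p' \<noteq> 0 \<and> q' \<noteq> 0 \<and> g = Fract p' q' \<and> (0::int) = int (degree q') - int (degree p')"
      by (rule exI[of _ p], rule exI[of _ q]) (use a pn d in simp)
  next
    fix n assume "\<exists>p' q'. p' \<noteq> 0 \<and> q' \<noteq> 0 \<and> g = Fract p' q' \<and> n = int (degree q') - int (degree p')"
    then obtain p' q' where b: "p' \<noteq> 0" "q' \<noteq> 0" "Fract p q = Fract p' q'" "n = int (degree q') - int (degree p')"
      using a by auto
    have e: "p * q' = p' * q" using b a eq_fract(1) by metis
    have "degree (p * q') = degree (p' * q)" using e by simp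
    hence "degree p + degree q' = degree p' + degree q"
      using pn a b by (simp add: degree_mult_eq)
    then show "n = 0" using b d by simp
  qed
qed

lemma ordTi_1:
  fixes g :: "'k::field poly fract"
  assumes "hasI g w" "w \<noteq> 0"
  shows "ord_Tinv (g / varT) = 1"
proof -
  obtain p q where a: "q \<noteq> 0" "degree p \<le> degree q" "g = Fract p q" "w = coeff p (degree q) / lead_coeff q"
    using assms unfolding hasI_def by blast
  with assms have c: "coeff p (degree q) \<noteq> 0" by auto
  then have pn: "p \<noteq> 0" by auto
  from c have "degree q \<le> degree p" using le_degree by blast
  with a have d: "degree p = degree q" by simp
  define q2 where "q2 = q * [:0,1:]"
  have q2n: "q2 \<noteq> 0" using a by (simp add: q2_def)
  have dq2: "degree q2 = degree q + 1" using a by (simp add: q2_def degree_mult_eq)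
  have fe: "g / varT = Fract p q2" using a by (simp add: varT_def q2_def)
  show ?thesis unfolding ord_Tinv_def
  proof (rule the_equality)
    show "\<exists>p' q'. p' \<noteq> 0 \<and> q' \<noteq> 0 \<and> g / varT = Fract p' q' \<and> (1::int) = int (degree q') - int (degree p')"
      by (rule exI[of _ p], rule exI[of _ q2]) (use fe pn q2n d dq2 in simp)
  next
    fix n assume "\<exists>p' q'. p' \<noteq> 0 \<and> q' \<noteq> 0 \<and> g / varT = Fract p' q' \<and> n = int (degree q') - int (degree p')"
    then obtain p' q' where b: "p' \<noteq> 0" "q' \<noteq> 0" "Fract p q2 = Fract p' q'" "n = int (degree q') - int (degree p')"
      using fe by auto
    have e: "p * q' = p' * q2" using b q2n eq_fract(1) by metis
    have "degree (p * q') = degree (p' * q2)" using e by simp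
    hence "degree p + degree q' = degree p' + degree q2"
      using pn q2n b by (simp add: degree_mult_eq)
    then show "n = 1" using b d dq2 by simp
  qed
qed



lemma has0_cong: "has0 f v \<Longrightarrow> v = w \<Longrightarrow> has0 f w" by simp
lemma hasI_cong: "hasI f v \<Longrightarrow> v = w \<Longrightarrow> hasI f w" by simp

lemmas has0_intros = has0_add has0_mult has0_diff has0_uminus has0_divide has0_power
  has0_numeral has0_one has0_zero has0_varT
lemmas hasI_intros = hasI_add hasI_mult hasI_diff hasI_uminus hasI_divide hasI_power
  hasI_numeral hasI_one hasI_zero hasI_invT hasI_of_nat

lemma varT_nz: "(varT :: 'k::field poly fract) \<noteq> 0"
  by (simp add: varT_def Zero_fract_def eq_fract)

lemma has0_c: "has0 (E0_c :: 'k::field poly fract) 1"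
  unfolding E0_c_def by (rule has0_cong, (rule has0_intros | simp)+)

lemma numeral_nz: "(numeral n :: 'k::field_char_0 poly fract) \<noteq> 0"
proof
  assume h: "(numeral n :: 'k poly fract) = 0"
  have a: "has0 (numeral n :: 'k poly fract) (numeral n)" by (rule has0_numeral)
  have "(numeral n::'k) = 0" using a has0_zero unfolding h by (rule has0_unique)
  then show False by simp
qed

lemma c_nz: "(E0_c :: 'k::field poly fract) \<noteq> 0"
proof
  assume h: "(E0_c :: 'k poly fract) = 0"
  have "(1::'k) = 0" using has0_c[where 'k='k] has0_zero unfolding h by (rule has0_unique)
  then show False by simp
qed

lemma hasI_C: "hasI ((E0_c :: 'k::field poly fract) / varT^3) 1"
proof -
  have "(E0_c :: 'k poly fract) / varT^3 = 1 + inverse varT ^ 2 + inverse varT ^ 3"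
    unfolding E0_c_def using varT_nz[where 'k='k]
    by (simp add: field_simps power2_eq_square power3_eq_cube)
  moreover have "hasI (1 + inverse varT ^ 2 + inverse varT ^ 3 :: 'k poly fract) (1 + 0^2 + 0^3)"
    by (rule hasI_intros)+
  ultimately show ?thesis by simp
qed

lemma one_ne_m1: "(1 :: 'k::field_char_0 poly fract) \<noteq> -1"
proof
  assume h: "(1 :: 'k poly fract) = -1"
  have "has0 (1 :: 'k poly fract) 1" by (rule has0_one)
  moreover have "has0 (1 :: 'k poly fract) (-1)" by (subst h) (rule has0_intros)+
  ultimately have "(1::'k) = -1" by (rule has0_unique)
  then show False by simp
qed

definition PP :: "'k::field poly fract ecpt" where "PP = Aff varT 1"

definition good :: "nat \<Rightarrow> 'k::field_char_0 poly fract ecpt \<Rightarrow> bool" where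
  "good n R \<longleftrightarrow> (\<exists>X Y x y. R = Aff X Y \<and> Sq n = Aff x y \<and> has0 X (of_rat x) \<and> has0 Y (of_rat y)
     \<and> hasI (X / varT) (1 / of_nat n ^ 2) \<and> hasI Y (1 / of_nat n ^ 3))"

lemma good1: "good 1 (ec_nmul E0_c 1 1 PP :: 'k::field_char_0 poly fract ecpt)"
proof -
  have "ec_nmul E0_c 1 1 PP = (Aff varT 1 :: 'k poly fract ecpt)" by (simp add: PP_def)
  moreover have "hasI (varT / varT :: 'k poly fract) (1 / of_nat 1 ^ 2)"
    using varT_nz[where 'k='k] hasI_one by simp
  moreover have "hasI (1 :: 'k poly fract) (1 / of_nat 1 ^ 3)" using hasI_one by simp
  moreover have "has0 (varT :: 'k poly fract) (of_rat 0)" using has0_varT by simp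
  moreover have "has0 (1 :: 'k poly fract) (of_rat 1)" using has0_one by simp
  ultimately show ?thesis unfolding good_def using Sq_1 by blast
qed

lemma good2: "good 2 (ec_nmul E0_c 1 2 PP :: 'k::field_char_0 poly fract ecpt)"
proof -
  define l :: "'k poly fract" where "l = (3 * varT^2 + 1) / (2 * E0_c * 1)"
  define X where "X = E0_c * l^2 - varT - varT"
  define Y where "Y = l * (varT - X) - 1"
  have e: "ec_nmul E0_c 1 2 PP = Aff X Y"
    using one_ne_m1[where 'k='k] by (simp add: PP_def numeral_2_eq_2 Let_def l_def X_def Y_def)
  have hl: "has0 l (1/2)"
    unfolding l_def by (rule has0_cong, (rule has0_c has0_intros | simp)+)
  have hX: "has0 X (of_rat (1/4))"
    unfolding X_def by (rule has0_cong, (rule has0_c hl has0_intros | simp add: of_rat_divide power2_eq_square)+)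
  have hY: "has0 Y (of_rat (-9/8))"
    unfolding Y_def by (rule has0_cong, (rule has0_c hl hX has0_intros | simp add: of_rat_divide of_rat_minus)+)
  define s :: "'k poly fract" where "s = inverse varT"
  define C :: "'k poly fract" where "C = E0_c / varT^3"
  have lT: "l * varT = (3 + s^2) / (2 * C)"
    unfolding l_def s_def C_def using varT_nz[where 'k='k] c_nz[where 'k='k] numeral_nz[of "num.Bit0 num.One", where 'k='k]
    by (simp add: field_simps power2_eq_square power3_eq_cube)
  have hlT: "hasI (l * varT) (3/2)" unfolding lT s_def C_def
    by (rule hasI_cong, (rule hasI_C hasI_intros | simp)+)
  have XT: "X / varT = C * (l * varT)^2 - 2"
    unfolding X_def C_def using varT_nz[where 'k='k]
    by (simp add: field_simps power2_eq_square power3_eq_cube)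
  have hXT: "hasI (X / varT) (1 / of_nat 2 ^ 2)" unfolding XT C_def
    by (rule hasI_cong, (rule hasI_C hlT hasI_intros | simp add: power2_eq_square)+)
  have YT: "Y = (l * varT) * (1 - X / varT) - 1"
    unfolding Y_def using varT_nz[where 'k='k] by (simp add: field_simps)
  have hYT: "hasI Y (1 / of_nat 2 ^ 3)" unfolding YT
    by (rule hasI_cong, (rule hXT hlT hasI_intros | simp add: power3_eq_cube)+)
  show ?thesis unfolding good_def using e hX hY hXT hYT Sq_2 by blast
qed

lemma num_ident:
  fixes n :: nat
  assumes n: "n \<ge> 2"
  defines "N \<equiv> (of_nat n :: 'k::field_char_0)"
  defines "L0 \<equiv> (1 / N^3 - 1) / (1 / N^2 - 1)"
  shows "1 / N^2 - 1 \<noteq> 0" "L0^2 - 1 - 1/N^2 = 1 / of_nat (Suc n) ^ 2"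
    "L0 * (1 - 1 / of_nat (Suc n) ^ 2) - 1 = 1 / of_nat (Suc n) ^ 3"
proof -
  have N0: "N \<noteq> 0" using n unfolding N_def by simp
  have N1: "N - 1 \<noteq> 0" using n unfolding N_def by simp
  have N2: "N + 1 \<noteq> 0" unfolding N_def by (metis of_nat_Suc of_nat_eq_0_iff add.commute nat.distinct(1))
  have S: "(of_nat (Suc n) :: 'k) = N + 1" unfolding N_def by simp
  have d: "1 - N^2 = (1 - N) * (1 + N)" by (simp add: algebra_simps power2_eq_square)
  have d3: "1 - N^3 = (1 - N) * (1 + N + N^2)" by (simp add: algebra_simps power2_eq_square power3_eq_cube)
  have N1': "1 - N \<noteq> 0" using N1 by (metis diff_self eq_iff_diff_eq_0)
  have N2': "1 + N \<noteq> 0" using N2 by (simp add: add.commute)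
  have D2: "1 - N^2 \<noteq> 0" unfolding d using N1' N2' by simp
  then show "1 / N^2 - 1 \<noteq> 0" using N0 by (simp add: field_simps)
  have L: "L0 = (1 + N + N^2) / (N * (1 + N))"
  proof -
    have "L0 = ((1 - N^3) / N^3) / ((1 - N^2) / N^2)"
      unfolding L0_def using N0 by (simp add: field_simps)
    also have "\<dots> = ((1 - N^3) * N^2) / (N^3 * (1 - N^2))"
      by (rule divide_divide_times_eq)
    also have "N^3 * (1 - N^2) = (N * (1 - N^2)) * N^2"
      by (simp add: power2_eq_square power3_eq_cube algebra_simps)
    also have "((1 - N^3) * N^2) / ((N * (1 - N^2)) * N^2) = (1 - N^3) / (N * (1 - N^2))"
      using N0 by simp
    also have "\<dots> = ((1 - N) * (1 + N + N^2)) / ((1 - N) * (N * (1 + N)))"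
      unfolding d d3 by (simp add: algebra_simps)
    also have "\<dots> = (1 + N + N^2) / (N * (1 + N))"
      using N1' by simp
    finally show ?thesis .
  qed
  define M where "M = 1 + N"
  have M0: "M \<noteq> 0" using N2' unfolding M_def .
  have S': "(of_nat (Suc n) :: 'k) = M" unfolding S M_def by simp
  have L': "L0 = (1 + N + N^2) / (N * M)" unfolding L M_def ..
  have "L0^2 - 1 - 1/N^2 = ((1 + N + N^2)^2 - N^2 * M^2 - M^2) / (N^2 * M^2)"
    unfolding L' using N0 M0 by (simp add: field_simps power2_eq_square)
  also have "(1 + N + N^2)^2 - N^2 * M^2 - M^2 = N^2"
    unfolding M_def by (simp add: algebra_simps power2_eq_square)
  also have "N^2 / (N^2 * M^2) = 1 / M^2" using N0 by simp
  finally show "L0^2 - 1 - 1/N^2 = 1 / of_nat (Suc n) ^ 2" unfolding S' .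
  have "L0 * (1 - 1 / M^2) - 1 = ((1 + N + N^2) * (M^2 - 1) - N * M^3) / (N * M^3)"
    unfolding L' using N0 M0 by (simp add: field_simps power2_eq_square power3_eq_cube)
  also have "(1 + N + N^2) * (M^2 - 1) - N * M^3 = N"
    unfolding M_def by (simp add: algebra_simps power2_eq_square power3_eq_cube)
  also have "N / (N * M^3) = 1 / M^3" using N0 by simp
  finally show "L0 * (1 - 1 / of_nat (Suc n) ^ 2) - 1 = 1 / of_nat (Suc n) ^ 3" unfolding S' .
qed


lemma good_step:
  fixes R :: "'k::field_char_0 poly fract ecpt"
  assumes n: "n \<ge> 2" and g: "good n R"
  shows "good (Suc n) (ec_add E0_c 1 PP R)"
proof -
  obtain X Y x y where R: "R = Aff X Y" and Sn: "Sq n = Aff x y" and hX: "has0 X (of_rat x)"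
    and hY: "has0 Y (of_rat y)" and iX: "hasI (X / varT) (1 / of_nat n ^ 2)"
    and iY: "hasI Y (1 / of_nat n ^ 3)"
    using g unfolding good_def by blast
  from Sq_good[OF n] Sn have x0: "x \<noteq> 0" by auto
  have XT: "X \<noteq> varT"
  proof
    assume "X = varT"
    then have "of_rat x = (0::'k)" using hX has0_varT has0_unique by metis
    then show False using x0 by simp
  qed
  define l where "l = (Y - 1) / (X - varT)"
  define X' where "X' = E0_c * l^2 - varT - X"
  define Y' where "Y' = l * (varT - X') - 1"
  have e: "ec_add E0_c 1 PP R = Aff X' Y'"
    using XT unfolding R PP_def by (simp add: Let_def l_def X'_def Y'_def)
  define lr where "lr = (y - 1) / x"
  define x' where "x' = lr^2 - x"
  define y' where "y' = - lr * x' - 1"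
  have Sn': "Sq (Suc n) = Aff x' y'"
    unfolding Sq_Suc Sn x'_def y'_def lr_def using chord_Q[OF x0] by simp
  have hl: "has0 l (of_rat lr)" unfolding l_def
    by (rule has0_cong, (rule hX hY has0_intros | simp add: x0)+, simp add: lr_def of_rat_divide of_rat_diff)
  have hX': "has0 X' (of_rat x')" unfolding X'_def
    by (rule has0_cong, (rule hX hl has0_c has0_intros)+, simp add: x'_def of_rat_diff of_rat_power)
  have hY': "has0 Y' (of_rat y')" unfolding Y'_def
    by (rule has0_cong, (rule hX' hl has0_varT has0_intros)+, simp add: y'_def of_rat_diff of_rat_mult of_rat_minus)
  define a where "a = X / varT"
  define L where "L = (Y - 1) / (a - 1)"
  define N :: 'k where "N = of_nat n"
  have Xa: "X = varT * a" unfolding a_def using varT_nz[where 'k='k] by simp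
  have a1: "a - 1 \<noteq> 0" using XT unfolding Xa by auto
  have lL: "l = L / varT" unfolding l_def L_def Xa using varT_nz[where 'k='k] a1
    by (simp add: field_simps)
  have ni: "1 / N^2 - 1 \<noteq> 0" "((1 / N^3 - 1) / (1 / N^2 - 1))^2 - 1 - 1/N^2 = 1 / of_nat (Suc n) ^ 2"
    "((1 / N^3 - 1) / (1 / N^2 - 1)) * (1 - 1 / of_nat (Suc n) ^ 2) - 1 = 1 / of_nat (Suc n) ^ 3"
    using num_ident[OF n, where 'k='k] unfolding N_def by auto
  have iL: "hasI L ((1 / N^3 - 1) / (1 / N^2 - 1))" unfolding L_def
    by (rule hasI_divide[OF hasI_diff[OF iY[folded N_def] hasI_one] hasI_diff[OF iX[folded a_def N_def] hasI_one]])
      (rule ni(1))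
  have X'T: "X' / varT = (E0_c / varT^3) * L^2 - 1 - a"
    unfolding X'_def lL Xa using varT_nz[where 'k='k]
    by (simp add: field_simps power2_eq_square power3_eq_cube)
  have iX': "hasI (X' / varT) (1 / of_nat (Suc n) ^ 2)" unfolding X'T
    by (rule hasI_cong, (rule hasI_C iL iX[folded a_def] hasI_intros)+, use ni(2) in \<open>simp add: N_def\<close>)
  have Y'T: "Y' = L * (1 - X' / varT) - 1"
    unfolding Y'_def lL using varT_nz[where 'k='k] by (simp add: field_simps)
  have iY': "hasI Y' (1 / of_nat (Suc n) ^ 3)" unfolding Y'T
    by (rule hasI_cong, (rule iL iX' hasI_intros)+, use ni(3) in simp)
  show ?thesis unfolding good_def using e Sn' hX' hY' iX' iY' by blast
qed

lemma good_all: "n \<ge> 1 \<Longrightarrow> good n (ec_nmul E0_c 1 n PP :: 'k::field_char_0 poly fract ecpt)"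
proof (induction n rule: nat_induct_at_least)
  case base then show ?case by (rule good1)
next
  case (Suc n)
  show ?case
  proof (cases "n = 1")
    case True then show ?thesis using good2 by (simp add: numeral_2_eq_2)
  next
    case False
    then have "n \<ge> 2" using Suc.hyps by simp
    from good_step[OF this Suc.IH] show ?thesis by simp
  qed
qed


lemma psi_props:
  fixes m :: int
  assumes m: "m \<notin> {0, 1, -1}"
  shows "(\<exists>w. has0 (varT * (psi m :: 'k::field_char_0 poly fract)) w \<and> w \<noteq> 0) \<and>
         hasI (psi m :: 'k poly fract) (of_int m)"
proof -
  define n where "n = nat \<bar>m\<bar>"
  have n2: "n \<ge> 2" using m unfolding n_def by auto
  obtain X Y :: "'k poly fract" and x y where R: "ec_nmul E0_c 1 n PP = Aff X Y" and Sn: "Sq n = Aff x y"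
    and hX: "has0 X (of_rat x)" and hY: "has0 Y (of_rat y)" and iX: "hasI (X / varT) (1 / of_nat n ^ 2)"
    and iY: "hasI Y (1 / of_nat n ^ 3)"
    using good_all[of n, where 'k='k] n2 unfolding good_def by auto
  from Sq_good[OF n2] Sn have x0: "x \<noteq> 0" and y0: "y \<noteq> 0" by auto
  have nz: "(of_nat n :: 'k) \<noteq> 0" using n2 by simp
  have T0: "(varT :: 'k poly fract) \<noteq> 0" by (rule varT_nz)
  show ?thesis
  proof (cases "m > 0")
    case True
    then have P: "Pm m = Aff X Y" using R unfolding Pm_def ec_mul_def PP_def n_def by simp
    then have ps: "psi m = X / (varT * Y)" unfolding psi_def by simp
    have "varT * psi m = X / Y" unfolding ps using T0 by simp
    moreover have "has0 (X / Y) (of_rat x / of_rat y)" using hX hY y0 by (intro has0_divide) auto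
    moreover have "of_rat x / of_rat y \<noteq> (0::'k)" using x0 y0 by simp
    moreover have "psi m = (X / varT) / Y" unfolding ps by simp
    moreover have "hasI ((X / varT) / Y) (of_int m)"
      by (rule hasI_cong[OF hasI_divide[OF iX iY]]) (use nz True in \<open>simp_all add: n_def power3_eq_cube power2_eq_square\<close>)
    ultimately show ?thesis by metis
  next
    case False
    then have mn: "m < 0" using m by auto
    then have P: "Pm m = Aff X (-Y)" using R unfolding Pm_def ec_mul_def PP_def n_def by simp
    then have ps: "psi m = X / (varT * (-Y))" unfolding psi_def by simp
    have "varT * psi m = X / (-Y)" unfolding ps using T0 by simp
    moreover have "has0 (X / (-Y)) (of_rat x / - of_rat y)" using hX hY y0 by (intro has0_divide has0_uminus) auto
    moreover have "of_rat x / - of_rat y \<noteq> (0::'k)" using x0 y0 by simp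
    moreover have "psi m = (X / varT) / (-Y)" unfolding ps by simp
    moreover have "hasI ((X / varT) / (-Y)) (of_int m)"
      by (rule hasI_cong[OF hasI_divide[OF iX hasI_uminus[OF iY]]]) (use nz mn in \<open>simp_all add: n_def power3_eq_cube power2_eq_square\<close>)
    ultimately show ?thesis by metis
  qed
qed



theorem lemma4p3:
  fixes m n r :: int
  assumes "m \<notin> {0, 1, -1}" and "n \<notin> {0, 1, -1}" and "r \<notin> {0, 1, -1}"
  defines "u \<equiv> (psi m * psi n - psi r + (1/2) / varT :: 'k::field_char_0 poly fract)"
      and "v \<equiv> (psi m * psi n - psi r + (1/3) / varT :: 'k::field_char_0 poly fract)"
  shows "ord_T u = -2 \<and> ord_T v = -2 \<and>
         (n * m = r \<longleftrightarrow> (ord_Tinv u = 1 \<or> ord_Tinv v = 1)) \<and>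
         (n * m \<noteq> r \<longleftrightarrow> (ord_Tinv u = 0 \<and> ord_Tinv v = 0))"
proof -
  obtain wm where hm: "has0 (varT * (psi m :: 'k poly fract)) wm" "wm \<noteq> 0" and im: "hasI (psi m :: 'k poly fract) (of_int m)"
    using psi_props[OF assms(1), where 'k='k] by blast
  obtain wn where hn: "has0 (varT * (psi n :: 'k poly fract)) wn" "wn \<noteq> 0" and iN: "hasI (psi n :: 'k poly fract) (of_int n)"
    using psi_props[OF assms(2), where 'k='k] by blast
  obtain wr where hr: "has0 (varT * (psi r :: 'k poly fract)) wr" "wr \<noteq> 0" and ir: "hasI (psi r :: 'k poly fract) (of_int r)"
    using psi_props[OF assms(3), where 'k='k] by blast
  have T0: "(varT :: 'k poly fract) \<noteq> 0" by (rule varT_nz)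
  have ordT: "ord_T (psi m * psi n - psi r + c / varT :: 'k poly fract) = -2"
    if hc: "has0 c c0" for c :: "'k poly fract" and c0
  proof -
    define g where "g = (varT * psi m) * (varT * psi n) - varT * (varT * psi r) + varT * c"
    have "psi m * psi n - psi r + c / varT = g / varT^2"
      unfolding g_def using T0 by (simp add: field_simps power2_eq_square)
    moreover have "has0 g (wm * wn - 0 * wr + 0 * c0)"
      unfolding g_def by (intro has0_add has0_diff has0_mult hm(1) hn(1) hr(1) has0_varT hc)
    moreover have "wm * wn - 0 * wr + 0 * c0 \<noteq> 0" using hm hn by simp
    ultimately show ?thesis using ordT_m2 by metis
  qed
  have h2: "has0 (1/2 :: 'k poly fract) (1/2)" by (intro has0_divide has0_one has0_numeral) simp
  have h3: "has0 (1/3 :: 'k poly fract) (1/3)" by (intro has0_divide has0_one has0_numeral) simp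
  have i2: "hasI (1/2 :: 'k poly fract) (1/2)" by (intro hasI_divide hasI_one hasI_numeral) simp
  have i3: "hasI (1/3 :: 'k poly fract) (1/3)" by (intro hasI_divide hasI_one hasI_numeral) simp
  have ou: "ord_T u = -2" unfolding u_def using ordT[OF h2] .
  have ov: "ord_T v = -2" unfolding v_def using ordT[OF h3] .
  define D where "D = (psi m * psi n - psi r :: 'k poly fract)"
  have iD: "hasI D (of_int m * of_int n - of_int r)" unfolding D_def
    by (intro hasI_diff hasI_mult im iN ir)
  have cT: "hasI (c / varT :: 'k poly fract) 0" if "hasI c c0" for c c0
  proof -
    have "c / varT = c * inverse varT" by (simp add: divide_inverse)
    moreover have "hasI (c * inverse varT) (c0 * 0)" by (intro hasI_mult that hasI_invT)
    ultimately show ?thesis by simp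
  qed
  show ?thesis
  proof (cases "n * m = r")
    case False
    have nz: "(of_int m * of_int n - of_int r :: 'k) \<noteq> 0"
    proof
      assume "(of_int m * of_int n - of_int r :: 'k) = 0"
      then have "(of_int (n * m) :: 'k) = of_int r" by (simp add: algebra_simps)
      then show False using False by (simp only: of_int_eq_iff)
    qed
    have "hasI u (of_int m * of_int n - of_int r + 0)" unfolding u_def D_def[symmetric]
      by (intro hasI_add iD cT[OF i2])
    then have "ord_Tinv u = 0" by (rule ordTi_0) (use nz in simp)
    moreover have "hasI v (of_int m * of_int n - of_int r + 0)" unfolding v_def D_def[symmetric]
      by (intro hasI_add iD cT[OF i3])
    then have "ord_Tinv v = 0" by (rule ordTi_0) (use nz in simp)
    ultimately show ?thesis using ou ov False by simp
  next
    case True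
    then have "(of_int m * of_int n - of_int r :: 'k) = 0"
      by (metis mult.commute of_int_mult right_minus_eq)
    with iD have "hasI D 0" by simp
    then obtain w where iw: "hasI (varT * D) w" using hasI_T0 by blast
    have ueq: "u = (varT * D + 1/2) / varT" unfolding u_def D_def using T0 by (simp add: field_simps)
    have veq: "v = (varT * D + 1/3) / varT" unfolding v_def D_def using T0 by (simp add: field_simps)
    have iu: "hasI (varT * D + 1/2) (w + 1/2)" by (intro hasI_add iw i2)
    have iv: "hasI (varT * D + 1/3) (w + 1/3)" by (intro hasI_add iw i3)
    have one: "ord_Tinv u = 1 \<or> ord_Tinv v = 1"
    proof (cases "w + 1/2 = (0::'k)")
      case True
      then have "w + 1/3 \<noteq> (0::'k)" by (simp add: add_eq_0_iff2 add_eq_0_iff)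
      then show ?thesis using ordTi_1[OF iv] veq by simp
    next
      case False
      then show ?thesis using ordTi_1[OF iu] ueq by simp
    qed
    then have "\<not> (ord_Tinv u = 0 \<and> ord_Tinv v = 0)" by auto
    then show ?thesis using ou ov True one by simp
  qed
qed

end
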